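(* Let $\mathbf{C}$ be a locally small category, $\Omega$ an object, $\Phi\colon\mathbf{C}^{\mathrm{op}}\to\mathbf{Pos}$ a functor whose fibres have all meets preserved by reindexing $f^*=\Phi f$, and $d_\Omega\in\Phi\Omega$. Let $\alpha_Y(S)=\bigwedge_{k\in S}k^*(d_\Omega)$, $\gamma_Y(d)=\{k\in\mathbf{C}(Y,\Omega)\mid d\preceq k^*(d_\Omega)\}$ and $\mathrm{cl}_Y=\gamma_Y\circ\alpha_Y$ for every object $Y$. Let $F\colon\mathbf{C}\to\mathbf{C}$ be a functor, $(\mathit{ev}_\lambda\colon F\Omega\to\Omega)_{\lambda\in\Lambda}$ a family of morphisms, and $\Lambda_Y(S)=\{\mathit{ev}_\lambda\circ Fh\mid\lambda\in\Lambda,h\in S\}$ for $S\subseteq\mathbf{C}(Y,\Omega)$. Fix an object $X$, a set $\Theta_X\subseteq\mathbf{C}(X,\Omega)$ of constants, a closure operator $\mathrm{cl}'_X$ on $(\mathcal{P}(\mathbf{C}(X,\Omega)),\subseteq)$, and an $F$-coalgebra $c\colon X\to FX$, and define $$\mathrm{lo}_X(S)=\mathcal{P}(c^\bullet)\big(\Lambda_X(\mathrm{cl}'_X(S))\big)\cup\Theta_X .$$ If $\mathrm{cl}'_X$ is compatible, i.e. $\Lambda_X(\mathrm{cl}'_X(\mathrm{cl}_X(S)))\subseteq\mathrm{cl}_{FX}(\Lambda_X(\mathrm{cl}'_X(S)))$ for all $S\subseteq\mathbf{C}(X,\Omega)$, then $\mathrm{lo}_X$ is $\mathrm{cl}_X$-compatible: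 $\mathrm{lo}_X(\mathrm{cl}_X(S))\subseteq\mathrm{cl}_X(\mathrm{lo}_X(S))$ for all $S\subseteq\mathbf{C}(X,\Omega)$.
   Context: A closure operator on a poset is a monotone, idempotent, extensive map. For $g\colon A\to B$, $g^\bullet\colon\mathbf{C}(B,\Omega)\to\mathbf{C}(A,\Omega)$ is precomposition with $g$, and $\mathcal{P}(g^\bullet)$ is its direct image on subsets; $c^\bullet\colon\mathbf{C}(FX,\Omega)\to\mathbf{C}(X,\Omega)$. *)

theory Defs
  imports Main
begin

record ('o, 'm) category =
  Obj  :: "'o set"
  Mor  :: "'m set"
  Dom  :: "'m \<Rightarrow> 'o"
  Cod  :: "'m \<Rightarrow> 'o"
  Comp :: "'m \<Rightarrow> 'm \<Rightarrow> 'm"   (* Comp g f = g \<circ> f *)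
  Id   :: "'o \<Rightarrow> 'm"

definition hom :: "('o, 'm) category \<Rightarrow> 'o \<Rightarrow> 'o \<Rightarrow> 'm set" where
  "hom C A B = {f \<in> Mor C. Dom C f = A \<and> Cod C f = B}"

definition category :: "('o, 'm) category \<Rightarrow> bool" where
  "category C \<longleftrightarrow>
     (\<forall>f \<in> Mor C. Dom C f \<in> Obj C \<and> Cod C f \<in> Obj C) \<and>
     (\<forall>A \<in> Obj C. Id C A \<in> hom C A A) \<and>
     (\<forall>A B D f g. f \<in> hom C A B \<longrightarrow> g \<in> hom C B D \<longrightarrow> Comp C g f \<in> hom C A D) \<and>
     (\<forall>A B f. f \<in> hom C A B \<longrightarrow> Comp C (Id C B) f = f \<and> Comp C f (Id C A) = f) \<and>
     (\<forall>A B D E f g h. f \<in> hom C A B \<longrightarrow> g \<in> hom C B D \<longrightarrow> h \<in> hom C D E \<longrightarrow>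
        Comp C h (Comp C g f) = Comp C (Comp C h g) f)"

definition endofunctor :: "('o, 'm) category \<Rightarrow> ('o \<Rightarrow> 'o) \<Rightarrow> ('m \<Rightarrow> 'm) \<Rightarrow> bool" where
  "endofunctor C Fo Fm \<longleftrightarrow>
     (\<forall>A \<in> Obj C. Fo A \<in> Obj C) \<and>
     (\<forall>A B f. f \<in> hom C A B \<longrightarrow> Fm f \<in> hom C (Fo A) (Fo B)) \<and>
     (\<forall>A \<in> Obj C. Fm (Id C A) = Id C (Fo A)) \<and>
     (\<forall>A B D f g. f \<in> hom C A B \<longrightarrow> g \<in> hom C B D \<longrightarrow>
        Fm (Comp C g f) = Comp C (Fm g) (Fm f))"

record ('o, 'm, 'p) indexed_poset =
  Fib :: "'o \<Rightarrow> 'p set"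
  Le  :: "'o \<Rightarrow> 'p \<Rightarrow> 'p \<Rightarrow> bool"
  Re  :: "'m \<Rightarrow> 'p \<Rightarrow> 'p"             (* reindexing f^* = \<Phi> f *)

definition is_glb :: "('o, 'm, 'p) indexed_poset \<Rightarrow> 'o \<Rightarrow> 'p set \<Rightarrow> 'p \<Rightarrow> bool" where
  "is_glb P A S m \<longleftrightarrow> m \<in> Fib P A \<and> (\<forall>s \<in> S. Le P A m s) \<and>
     (\<forall>x \<in> Fib P A. (\<forall>s \<in> S. Le P A x s) \<longrightarrow> Le P A x m)"

definition meet :: "('o, 'm, 'p) indexed_poset \<Rightarrow> 'o \<Rightarrow> 'p set \<Rightarrow> 'p" where
  "meet P A S = (THE m. is_glb P A S m)"

definition meet_preserving_indexed_poset ::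
    "('o, 'm) category \<Rightarrow> ('o, 'm, 'p) indexed_poset \<Rightarrow> bool" where
  "meet_preserving_indexed_poset C P \<longleftrightarrow>
     \<comment> \<open>each fibre is a poset\<close>
     (\<forall>A \<in> Obj C. (\<forall>x \<in> Fib P A. Le P A x x) \<and>
        (\<forall>x \<in> Fib P A. \<forall>y \<in> Fib P A. \<forall>z \<in> Fib P A. Le P A x y \<longrightarrow> Le P A y z \<longrightarrow> Le P A x z) \<and>
        (\<forall>x \<in> Fib P A. \<forall>y \<in> Fib P A. Le P A x y \<longrightarrow> Le P A y x \<longrightarrow> x = y)) \<and>
     \<comment> \<open>reindexing along f : A \<rightarrow> B is a monotone map \<Phi> B \<rightarrow> \<Phi> A\<close>
     (\<forall>A B f. f \<in> hom C A B \<longrightarrow> (\<forall>x \<in> Fib P B. Re P f x \<in> Fib P A) \<and>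
        (\<forall>x \<in> Fib P B. \<forall>y \<in> Fib P B. Le P B x y \<longrightarrow> Le P A (Re P f x) (Re P f y))) \<and>
     \<comment> \<open>contravariant functoriality\<close>
     (\<forall>A \<in> Obj C. \<forall>x \<in> Fib P A. Re P (Id C A) x = x) \<and>
     (\<forall>A B D f g. f \<in> hom C A B \<longrightarrow> g \<in> hom C B D \<longrightarrow>
        (\<forall>x \<in> Fib P D. Re P (Comp C g f) x = Re P f (Re P g x))) \<and>
     \<comment> \<open>every fibre has all meets\<close>
     (\<forall>A \<in> Obj C. \<forall>S \<subseteq> Fib P A. \<exists>m. is_glb P A S m) \<and>
     \<comment> \<open>reindexing preserves all meets\<close>
     (\<forall>A B f S m. f \<in> hom C A B \<longrightarrow> S \<subseteq> Fib P B \<longrightarrow> is_glb P B S m \<longrightarrow>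
        is_glb P A (Re P f ` S) (Re P f m))"

definition alpha ::
    "('o, 'm) category \<Rightarrow> ('o, 'm, 'p) indexed_poset \<Rightarrow> 'p \<Rightarrow> 'o \<Rightarrow> 'm set \<Rightarrow> 'p" where
  "alpha C P d\<^sub>\<Omega> Y S = meet P Y ((\<lambda>k. Re P k d\<^sub>\<Omega>) ` S)"

definition gamma ::
    "('o, 'm) category \<Rightarrow> ('o, 'm, 'p) indexed_poset \<Rightarrow> 'o \<Rightarrow> 'p \<Rightarrow> 'o \<Rightarrow> 'p \<Rightarrow> 'm set" where
  "gamma C P \<Omega> d\<^sub>\<Omega> Y d = {k \<in> hom C Y \<Omega>. Le P Y d (Re P k d\<^sub>\<Omega>)}"

definition cl ::
    "('o, 'm) category \<Rightarrow> ('o, 'm, 'p) indexed_poset \<Rightarrow> 'o \<Rightarrow> 'p \<Rightarrow> 'o \<Rightarrow> 'm set \<Rightarrow> 'm set" where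
  "cl C P \<Omega> d\<^sub>\<Omega> Y S = gamma C P \<Omega> d\<^sub>\<Omega> Y (alpha C P d\<^sub>\<Omega> Y S)"

definition Lam :: "('o, 'm) category \<Rightarrow> ('m \<Rightarrow> 'm) \<Rightarrow> 'l set \<Rightarrow> ('l \<Rightarrow> 'm) \<Rightarrow> 'm set \<Rightarrow> 'm set" where
  "Lam C Fm L ev S = {Comp C (ev l) (Fm h) | l h. l \<in> L \<and> h \<in> S}"

definition closure_operator_on :: "'a set \<Rightarrow> ('a set \<Rightarrow> 'a set) \<Rightarrow> bool" where
  "closure_operator_on U c \<longleftrightarrow>
     (\<forall>S \<subseteq> U. c S \<subseteq> U) \<and>
     (\<forall>S T. S \<subseteq> T \<longrightarrow> T \<subseteq> U \<longrightarrow> c S \<subseteq> c T) \<and>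
     (\<forall>S \<subseteq> U. S \<subseteq> c S) \<and>
     (\<forall>S \<subseteq> U. c (c S) = c S)"

definition precomp_img :: "('o, 'm) category \<Rightarrow> 'm \<Rightarrow> 'm set \<Rightarrow> 'm set" where
  "precomp_img C c T = (\<lambda>k. Comp C k c) ` T"

definition lo ::
    "('o, 'm) category \<Rightarrow> ('m \<Rightarrow> 'm) \<Rightarrow> 'l set \<Rightarrow> ('l \<Rightarrow> 'm) \<Rightarrow> 'm set \<Rightarrow>
     ('m set \<Rightarrow> 'm set) \<Rightarrow> 'm \<Rightarrow> 'm set \<Rightarrow> 'm set" where
  "lo C Fm L ev \<Theta> cl' c S = precomp_img C c (Lam C Fm L ev (cl' S)) \<union> \<Theta>"

end

theory Submission
  imports Defs
begin

context
  fixes C :: "('o, 'm) category" and P :: "('o, 'm, 'p) indexed_poset"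
  assumes Phi: "meet_preserving_indexed_poset C P"
begin

lemma mp_poset: "\<forall>A \<in> Obj C. (\<forall>x \<in> Fib P A. Le P A x x) \<and>
        (\<forall>x \<in> Fib P A. \<forall>y \<in> Fib P A. \<forall>z \<in> Fib P A. Le P A x y \<longrightarrow> Le P A y z \<longrightarrow> Le P A x z) \<and>
        (\<forall>x \<in> Fib P A. \<forall>y \<in> Fib P A. Le P A x y \<longrightarrow> Le P A y x \<longrightarrow> x = y)"
  using Phi unfolding meet_preserving_indexed_poset_def by (elim conjE) assumption

lemma mp_re: "\<forall>A B f. f \<in> hom C A B \<longrightarrow> (\<forall>x \<in> Fib P B. Re P f x \<in> Fib P A) \<and>
        (\<forall>x \<in> Fib P B. \<forall>y \<in> Fib P B. Le P B x y \<longrightarrow> Le P A (Re P f x) (Re P f y))"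
  using Phi unfolding meet_preserving_indexed_poset_def by (elim conjE) assumption

lemma mp_comp: "\<forall>A B D f g. f \<in> hom C A B \<longrightarrow> g \<in> hom C B D \<longrightarrow>
        (\<forall>x \<in> Fib P D. Re P (Comp C g f) x = Re P f (Re P g x))"
  using Phi unfolding meet_preserving_indexed_poset_def by (elim conjE) assumption

lemma mp_ex: "\<forall>A \<in> Obj C. \<forall>S \<subseteq> Fib P A. \<exists>m. is_glb P A S m"
  using Phi unfolding meet_preserving_indexed_poset_def by (elim conjE) assumption

lemma mp_pres: "\<forall>A B f S m. f \<in> hom C A B \<longrightarrow> S \<subseteq> Fib P B \<longrightarrow> is_glb P B S m \<longrightarrow>
        is_glb P A (Re P f ` S) (Re P f m)"
  using Phi unfolding meet_preserving_indexed_poset_def by (elim conjE) assumption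

lemma anti: "A \<in> Obj C \<Longrightarrow> x \<in> Fib P A \<Longrightarrow> y \<in> Fib P A \<Longrightarrow> Le P A x y \<Longrightarrow> Le P A y x \<Longrightarrow> x = y"
  using mp_poset by metis

lemma trans: "A \<in> Obj C \<Longrightarrow> x \<in> Fib P A \<Longrightarrow> y \<in> Fib P A \<Longrightarrow> z \<in> Fib P A \<Longrightarrow> Le P A x y \<Longrightarrow> Le P A y z \<Longrightarrow> Le P A x z"
  using mp_poset by metis

lemma re_fib: "f \<in> hom C A B \<Longrightarrow> x \<in> Fib P B \<Longrightarrow> Re P f x \<in> Fib P A"
  using mp_re by metis

lemma re_mono: "f \<in> hom C A B \<Longrightarrow> x \<in> Fib P B \<Longrightarrow> y \<in> Fib P B \<Longrightarrow> Le P B x y \<Longrightarrow> Le P A (Re P f x) (Re P f y)"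
  using mp_re by metis

lemma re_comp: "f \<in> hom C A B \<Longrightarrow> g \<in> hom C B D \<Longrightarrow> x \<in> Fib P D \<Longrightarrow> Re P (Comp C g f) x = Re P f (Re P g x)"
  using mp_comp by metis

lemma re_pres: "f \<in> hom C A B \<Longrightarrow> S \<subseteq> Fib P B \<Longrightarrow> is_glb P B S m \<Longrightarrow> is_glb P A (Re P f ` S) (Re P f m)"
  using mp_pres by metis

lemma glb_unique:
  assumes A: "A \<in> Obj C" and g1: "is_glb P A S m" and g2: "is_glb P A S m'"
  shows "m = m'"
proof -
  have "m \<in> Fib P A" "m' \<in> Fib P A" "Le P A m m'" "Le P A m' m"
    using g1 g2 unfolding is_glb_def by auto
  then show ?thesis using anti[OF A] by blast
qed

lemma meet_glb:
  assumes A: "A \<in> Obj C" and S: "S \<subseteq> Fib P A"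
  shows "is_glb P A S (meet P A S)"
proof -
  obtain m where m: "is_glb P A S m" using mp_ex A S by blast
  have "\<And>m'. is_glb P A S m' \<Longrightarrow> m' = m" using glb_unique[OF A _ m] by blast
  then show ?thesis unfolding meet_def using m by (rule_tac theI) 
qed

lemma alpha_glb:
  assumes Y: "Y \<in> Obj C" and d: "d \<in> Fib P \<Omega>" and S: "S \<subseteq> hom C Y \<Omega>"
  shows "is_glb P Y ((\<lambda>k. Re P k d) ` S) (alpha C P d Y S)"
  unfolding alpha_def
  by (rule meet_glb[OF Y]) (use S re_fib[OF _ d] in blast)

lemma cl_mono:
  assumes Y: "Y \<in> Obj C" and d: "d \<in> Fib P \<Omega>" and AB: "A \<subseteq> B" and B: "B \<subseteq> hom C Y \<Omega>"
  shows "cl C P \<Omega> d Y A \<subseteq> cl C P \<Omega> d Y B"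
proof
  fix k assume k: "k \<in> cl C P \<Omega> d Y A"
  have gA: "is_glb P Y ((\<lambda>k. Re P k d) ` A) (alpha C P d Y A)"
    using alpha_glb[OF Y d] AB B by blast
  have gB: "is_glb P Y ((\<lambda>k. Re P k d) ` B) (alpha C P d Y B)"
    using alpha_glb[OF Y d] B by blast
  have le: "Le P Y (alpha C P d Y B) (alpha C P d Y A)"
  proof -
    have "\<forall>s \<in> (\<lambda>k. Re P k d) ` A. Le P Y (alpha C P d Y B) s"
      using gB AB unfolding is_glb_def by blast
    then show ?thesis using gA gB unfolding is_glb_def by blast
  qed
  have kh: "k \<in> hom C Y \<Omega>" and kl: "Le P Y (alpha C P d Y A) (Re P k d)"
    using k unfolding cl_def gamma_def by auto
  have "Le P Y (alpha C P d Y B) (Re P k d)"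
    by (rule trans[OF Y _ _ _ le kl]) (use gA gB re_fib[OF kh d] in \<open>auto simp: is_glb_def\<close>)
  then show "k \<in> cl C P \<Omega> d Y B" using kh unfolding cl_def gamma_def by auto
qed

lemma cl_ext:
  assumes Y: "Y \<in> Obj C" and d: "d \<in> Fib P \<Omega>" and B: "B \<subseteq> hom C Y \<Omega>"
  shows "B \<subseteq> cl C P \<Omega> d Y B"
  using alpha_glb[OF Y d B] B unfolding cl_def gamma_def is_glb_def by blast

end

lemma cat_comp: "category C \<Longrightarrow> f \<in> hom C A B \<Longrightarrow> g \<in> hom C B D \<Longrightarrow> Comp C g f \<in> hom C A D"
proof -
  assume "category C"
  then have "\<forall>A B D f g. f \<in> hom C A B \<longrightarrow> g \<in> hom C B D \<longrightarrow> Comp C g f \<in> hom C A D"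
    unfolding category_def by (elim conjE) assumption
  then show "f \<in> hom C A B \<Longrightarrow> g \<in> hom C B D \<Longrightarrow> Comp C g f \<in> hom C A D" by metis
qed

lemma F_obj: "endofunctor C Fo Fm \<Longrightarrow> A \<in> Obj C \<Longrightarrow> Fo A \<in> Obj C"
  unfolding endofunctor_def by metis

lemma F_hom: "endofunctor C Fo Fm \<Longrightarrow> f \<in> hom C A B \<Longrightarrow> Fm f \<in> hom C (Fo A) (Fo B)"
proof -
  assume "endofunctor C Fo Fm"
  then have "\<forall>A B f. f \<in> hom C A B \<longrightarrow> Fm f \<in> hom C (Fo A) (Fo B)"
    unfolding endofunctor_def by (elim conjE) assumption
  then show "f \<in> hom C A B \<Longrightarrow> Fm f \<in> hom C (Fo A) (Fo B)" by metis
qed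

lemma clop_sub: "closure_operator_on U c \<Longrightarrow> S \<subseteq> U \<Longrightarrow> c S \<subseteq> U"
  unfolding closure_operator_on_def by metis

theorem proposition3:
  fixes C :: "('o, 'm) category" and P :: "('o, 'm, 'p) indexed_poset"
    and \<Omega> X :: 'o and d\<^sub>\<Omega> :: 'p
    and Fo :: "'o \<Rightarrow> 'o" and Fm :: "'m \<Rightarrow> 'm"
    and L :: "'l set" and ev :: "'l \<Rightarrow> 'm"
    and \<Theta> :: "'m set" and cl' :: "'m set \<Rightarrow> 'm set" and c :: 'm
  assumes cat: "category C"
    and \<Omega>_obj: "\<Omega> \<in> Obj C" and X_obj: "X \<in> Obj C"
    and Phi: "meet_preserving_indexed_poset C P"
    and d_in: "d\<^sub>\<Omega> \<in> Fib P \<Omega>"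
    and F: "endofunctor C Fo Fm"
    and ev: "\<forall>l \<in> L. ev l \<in> hom C (Fo \<Omega>) \<Omega>"
    and Theta: "\<Theta> \<subseteq> hom C X \<Omega>"
    and clop: "closure_operator_on (hom C X \<Omega>) cl'"
    and coalg: "c \<in> hom C X (Fo X)"
    and compat: "\<forall>S \<subseteq> hom C X \<Omega>.
       Lam C Fm L ev (cl' (cl C P \<Omega> d\<^sub>\<Omega> X S))
         \<subseteq> cl C P \<Omega> d\<^sub>\<Omega> (Fo X) (Lam C Fm L ev (cl' S))"
  shows "\<forall>S \<subseteq> hom C X \<Omega>.
       lo C Fm L ev \<Theta> cl' c (cl C P \<Omega> d\<^sub>\<Omega> X S)
         \<subseteq> cl C P \<Omega> d\<^sub>\<Omega> X (lo C Fm L ev \<Theta> cl' c S)"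
proof (intro allI impI)
  fix S assume S: "S \<subseteq> hom C X \<Omega>"
  have FX: "Fo X \<in> Obj C" using F_obj[OF F X_obj] .
  have compC: "\<And>A B D f g. f \<in> hom C A B \<Longrightarrow> g \<in> hom C B D \<Longrightarrow> Comp C g f \<in> hom C A D"
    using cat_comp[OF cat] by blast
  have Fmh: "\<And>A B f. f \<in> hom C A B \<Longrightarrow> Fm f \<in> hom C (Fo A) (Fo B)"
    using F_hom[OF F] by blast
  define T where "T = Lam C Fm L ev (cl' S)"
  have clS: "cl' S \<subseteq> hom C X \<Omega>" using clop_sub[OF clop S] .
  have T: "T \<subseteq> hom C (Fo X) \<Omega>"
  proof
    fix t assume "t \<in> T"
    then obtain l h where t: "t = Comp C (ev l) (Fm h)" "l \<in> L" "h \<in> cl' S"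
      unfolding T_def Lam_def by blast
    show "t \<in> hom C (Fo X) \<Omega>" using t clS ev Fmh compC by blast
  qed
  have cT: "precomp_img C c T \<subseteq> hom C X \<Omega>"
    unfolding precomp_img_def using T coalg compC by blast
  have loS: "lo C Fm L ev \<Theta> cl' c S \<subseteq> hom C X \<Omega>"
    unfolding lo_def T_def[symmetric] using cT Theta by blast
  have clX: "cl C P \<Omega> d\<^sub>\<Omega> X S \<subseteq> hom C X \<Omega>" unfolding cl_def gamma_def by blast
  have key: "precomp_img C c (cl C P \<Omega> d\<^sub>\<Omega> (Fo X) T) \<subseteq> cl C P \<Omega> d\<^sub>\<Omega> X (precomp_img C c T)"
  proof
    fix x assume "x \<in> precomp_img C c (cl C P \<Omega> d\<^sub>\<Omega> (Fo X) T)"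
    then obtain k where x: "x = Comp C k c" and k: "k \<in> hom C (Fo X) \<Omega>"
      and kl: "Le P (Fo X) (alpha C P d\<^sub>\<Omega> (Fo X) T) (Re P k d\<^sub>\<Omega>)"
      unfolding precomp_img_def cl_def gamma_def by blast
    have gT: "is_glb P (Fo X) ((\<lambda>k. Re P k d\<^sub>\<Omega>) ` T) (alpha C P d\<^sub>\<Omega> (Fo X) T)"
      using alpha_glb[OF Phi FX d_in T] .
    have fibT: "(\<lambda>k. Re P k d\<^sub>\<Omega>) ` T \<subseteq> Fib P (Fo X)" using T re_fib[OF Phi _ d_in] by blast
    have pres: "is_glb P X (Re P c ` ((\<lambda>k. Re P k d\<^sub>\<Omega>) ` T)) (Re P c (alpha C P d\<^sub>\<Omega> (Fo X) T))"
      using re_pres[OF Phi coalg fibT gT] .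
    have compRe: "\<And>g. g \<in> hom C (Fo X) \<Omega> \<Longrightarrow> Re P (Comp C g c) d\<^sub>\<Omega> = Re P c (Re P g d\<^sub>\<Omega>)"
      using re_comp[OF Phi coalg _ d_in] by blast
    have imgeq: "Re P c ` ((\<lambda>k. Re P k d\<^sub>\<Omega>) ` T) = (\<lambda>k. Re P k d\<^sub>\<Omega>) ` precomp_img C c T"
      unfolding precomp_img_def image_image using compRe T by (force simp: image_iff)
    have gX: "is_glb P X ((\<lambda>k. Re P k d\<^sub>\<Omega>) ` precomp_img C c T) (alpha C P d\<^sub>\<Omega> X (precomp_img C c T))"
      using alpha_glb[OF Phi X_obj d_in cT] .
    have aeq: "alpha C P d\<^sub>\<Omega> X (precomp_img C c T) = Re P c (alpha C P d\<^sub>\<Omega> (Fo X) T)"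
      using glb_unique[OF Phi X_obj gX] pres imgeq by simp
    have mono: "\<forall>x \<in> Fib P (Fo X). \<forall>y \<in> Fib P (Fo X). Le P (Fo X) x y \<longrightarrow> Le P X (Re P c x) (Re P c y)"
      using re_mono[OF Phi coalg] by blast
    have "Le P X (Re P c (alpha C P d\<^sub>\<Omega> (Fo X) T)) (Re P c (Re P k d\<^sub>\<Omega>))"
      using mono kl gT re_fib[OF Phi k d_in] unfolding is_glb_def by blast
    then have "Le P X (alpha C P d\<^sub>\<Omega> X (precomp_img C c T)) (Re P x d\<^sub>\<Omega>)"
      using aeq compRe[OF k] x by simp
    moreover have "x \<in> hom C X \<Omega>" using x k coalg compC by blast
    ultimately show "x \<in> cl C P \<Omega> d\<^sub>\<Omega> X (precomp_img C c T)"
      unfolding cl_def gamma_def by blast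
  qed
  have step1: "precomp_img C c (Lam C Fm L ev (cl' (cl C P \<Omega> d\<^sub>\<Omega> X S)))
      \<subseteq> precomp_img C c (cl C P \<Omega> d\<^sub>\<Omega> (Fo X) T)"
    using compat S unfolding T_def precomp_img_def by blast
  have step2: "cl C P \<Omega> d\<^sub>\<Omega> X (precomp_img C c T) \<subseteq> cl C P \<Omega> d\<^sub>\<Omega> X (lo C Fm L ev \<Theta> cl' c S)"
    by (rule cl_mono[OF Phi X_obj d_in _ loS]) (simp add: lo_def T_def)
  have step3: "\<Theta> \<subseteq> cl C P \<Omega> d\<^sub>\<Omega> X (lo C Fm L ev \<Theta> cl' c S)"
    using cl_ext[OF Phi X_obj d_in loS] unfolding lo_def by blast
  show "lo C Fm L ev \<Theta> cl' c (cl C P \<Omega> d\<^sub>\<Omega> X S) \<subseteq> cl C P \<Omega> d\<^sub>\<Omega> X (lo C Fm L ev \<Theta> cl' c S)"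
    using step1 key step2 step3 unfolding lo_def[of _ _ _ _ _ _ _ "cl C P \<Omega> d\<^sub>\<Omega> X S"] by blast
qed

end
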